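(* Let $\mathbf P=(P,\leq,{}',0,1)$ be a poset with complementation such that its Dedekind-MacNeille completion $\mathrm{DM}(\mathbf P)$ is an orthomodular lattice. Then $\mathbf P$ is pseudo-orthomodular.
   Context: For $M\subseteq P$, $U(M)$ and $L(M)$ are the sets of upper and lower bounds of $M$; $U(a,b)=U(\{a,b\})$ etc. A poset with complementation is a bounded poset with antitone involution $'$ ($x\le y\Rightarrow y'\le x'$, $x''=x$) with $L(x,x')=\{0\}$, $U(x,x')=\{1\}$. It is pseudo-orthomodular if $L(U(L(x,y),y'),y)=L(x,y)$ for all $x,y\in P$, equivalently $U(L(U(x,y),y'),y)=U(x,y)$. The Dedekind-MacNeille completion $\mathrm{DM}(\mathbf P)$ is the complete lattice of subsets $B\subseteq P$ with $L(U(B))=B$ ordered by inclusion, $P$ embedded via $x\mapsto L(\{x\})$, with the antitone involution $X'=L(\{u'\mid u\in X\})$. A lattice with complementation is orthomodular if $x\vee y=((x\vee y)\wedge y')\vee y$ for all $x,y$. *)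

theory Defs
  imports Main
begin

text \<open>The poset P is the whole type 'a (a bounded partial order with bot = 0, top = 1);
  the complementation is a function cmp on 'a.\<close>

definition UB :: "'a::order set \<Rightarrow> 'a set" where
  "UB M = {x. \<forall>m\<in>M. m \<le> x}"

definition LB :: "'a::order set \<Rightarrow> 'a set" where
  "LB M = {x. \<forall>m\<in>M. x \<le> m}"

definition poset_with_complementation :: "('a::{order_bot,order_top} \<Rightarrow> 'a) \<Rightarrow> bool" where
  "poset_with_complementation cmp \<longleftrightarrow>
     (\<forall>x y. x \<le> y \<longrightarrow> cmp y \<le> cmp x) \<and>
     (\<forall>x. cmp (cmp x) = x) \<and>
     (\<forall>x. LB {x, cmp x} = {bot}) \<and>
     (\<forall>x. UB {x, cmp x} = {top})"

text \<open>L(U(L(x,y),y'),y) = L(x,y), where U(A,b) = U(A \<union> {b}).\<close>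
definition pseudo_orthomodular :: "('a::{order_bot,order_top} \<Rightarrow> 'a) \<Rightarrow> bool" where
  "pseudo_orthomodular cmp \<longleftrightarrow>
     (\<forall>x y. LB (UB (LB {x, y} \<union> {cmp y}) \<union> {y}) = LB {x, y})"

text \<open>Dedekind-MacNeille completion: carrier, order = inclusion, meet = intersection,
  join X Y = L(U(X \<union> Y)), bottom = L{0}, top = L{1}, involution X' = L{u' | u \<in> X}.\<close>
definition DM :: "'a::order set set" where
  "DM = {B. LB (UB B) = B}"

definition DM_join :: "'a::order set \<Rightarrow> 'a set \<Rightarrow> 'a set" where
  "DM_join X Y = LB (UB (X \<union> Y))"

definition DM_cmp :: "('a::order \<Rightarrow> 'a) \<Rightarrow> 'a set \<Rightarrow> 'a set" where
  "DM_cmp cmp X = LB (cmp ` X)"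

definition DM_orthomodular :: "('a::{order_bot,order_top} \<Rightarrow> 'a) \<Rightarrow> bool" where
  "DM_orthomodular cmp \<longleftrightarrow>
     (\<forall>X\<in>DM. \<forall>Y\<in>DM. X \<subseteq> Y \<longrightarrow> DM_cmp cmp Y \<subseteq> DM_cmp cmp X) \<and>
     (\<forall>X\<in>DM. DM_cmp cmp (DM_cmp cmp X) = X) \<and>
     (\<forall>X\<in>DM. X \<inter> DM_cmp cmp X = LB {bot}) \<and>
     (\<forall>X\<in>DM. DM_join X (DM_cmp cmp X) = LB {top}) \<and>
     (\<forall>X\<in>DM. \<forall>Y\<in>DM. DM_join X Y = DM_join (DM_join X Y \<inter> DM_cmp cmp Y) Y)"

end

theory Submission
  imports Defs
begin

lemma LB_anti: "S \<subseteq> T \<Longrightarrow> LB T \<subseteq> LB S" unfolding LB_def by auto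
lemma UB_anti: "S \<subseteq> T \<Longrightarrow> UB T \<subseteq> UB S" unfolding UB_def by auto
lemma LUL: "LB (UB (LB S)) = LB (S::'a::order set)"
  unfolding LB_def UB_def by auto
lemma LB_DM: "LB S \<in> DM" unfolding DM_def by (simp add: LUL)
lemma ext_LU: "S \<subseteq> LB (UB (S::'a::order set))" unfolding LB_def UB_def by auto
lemma join_DM: "DM_join X Y \<in> DM" unfolding DM_join_def by (simp add: LB_DM)
lemma cmp_DM: "DM_cmp c X \<in> DM" unfolding DM_cmp_def by (simp add: LB_DM)
lemma join_least: "X \<subseteq> Z \<Longrightarrow> Y \<subseteq> Z \<Longrightarrow> Z \<in> DM \<Longrightarrow> DM_join X Y \<subseteq> Z"
proof -
  assume a: "X \<subseteq> Z" "Y \<subseteq> Z" "Z \<in> DM"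
  have "X \<union> Y \<subseteq> Z" using a by blast
  hence "LB (UB (X \<union> Y)) \<subseteq> LB (UB Z)" by (intro LB_anti UB_anti)
  thus ?thesis using a(3) unfolding DM_join_def DM_def by simp
qed
lemma join_ub1: "X \<subseteq> DM_join X Y" unfolding DM_join_def using ext_LU by blast
lemma join_ub2: "Y \<subseteq> DM_join X Y" unfolding DM_join_def using ext_LU by blast
lemma int_DM: "X \<in> DM \<Longrightarrow> Y \<in> DM \<Longrightarrow> X \<inter> Y \<in> DM"
proof -
  assume a: "X \<in> DM" "Y \<in> DM"
  have "LB (UB (X \<inter> Y)) \<subseteq> LB (UB X)" by (intro LB_anti UB_anti) blast
  moreover have "LB (UB (X \<inter> Y)) \<subseteq> LB (UB Y)" by (intro LB_anti UB_anti) blast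
  ultimately have "LB (UB (X \<inter> Y)) \<subseteq> X \<inter> Y" using a unfolding DM_def by blast
  thus ?thesis unfolding DM_def using ext_LU by blast
qed
lemma LB_Un: "LB (S \<union> T) = LB S \<inter> LB T" unfolding LB_def by auto
lemma UB_Un: "UB (S \<union> T) = UB S \<inter> UB T" unfolding UB_def by auto
lemma UL1: "UB (LB {z}) = UB {(z::'a::order)}" unfolding UB_def LB_def
  by (auto dest: order_trans)

theorem theorem4:
  fixes cmp :: "'a::{order_bot,order_top} \<Rightarrow> 'a"
  assumes "poset_with_complementation cmp"
    and "DM_orthomodular cmp"
  shows "pseudo_orthomodular cmp"
proof -
  have anti: "\<And>x y. x \<le> y \<Longrightarrow> cmp y \<le> cmp x" and inv: "\<And>x. cmp (cmp x) = x"
    using assms(1) unfolding poset_with_complementation_def by auto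
  define c where "c = DM_cmp cmp"
  have canti: "\<And>X Y. X \<in> DM \<Longrightarrow> Y \<in> DM \<Longrightarrow> X \<subseteq> Y \<Longrightarrow> c Y \<subseteq> c X"
    and cinv: "\<And>X. X \<in> DM \<Longrightarrow> c (c X) = X"
    and oml: "\<And>X Y. X \<in> DM \<Longrightarrow> Y \<in> DM \<Longrightarrow> DM_join X Y = DM_join (DM_join X Y \<inter> c Y) Y"
    using assms(2) unfolding DM_orthomodular_def c_def by auto
  have cD: "\<And>X. c X \<in> DM" unfolding c_def by (rule cmp_DM)
  have dm1: "c (X \<inter> Y) = DM_join (c X) (c Y)" if "X \<in> DM" "Y \<in> DM" for X Y
  proof
    let ?J = "DM_join (c X) (c Y)"
    have "c ?J \<subseteq> c (c X)" by (rule canti) (auto simp: cD join_DM join_ub1)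
    moreover have "c ?J \<subseteq> c (c Y)" by (rule canti) (auto simp: cD join_DM join_ub2)
    ultimately have "c ?J \<subseteq> X \<inter> Y" using cinv that by auto
    hence "c (X \<inter> Y) \<subseteq> c (c ?J)" using canti int_DM that cD by blast
    thus "c (X \<inter> Y) \<subseteq> ?J" using cinv join_DM by metis
    show "?J \<subseteq> c (X \<inter> Y)"
    proof (rule join_least)
      show "c X \<subseteq> c (X \<inter> Y)" by (rule canti) (auto simp: that int_DM)
      show "c Y \<subseteq> c (X \<inter> Y)" by (rule canti) (auto simp: that int_DM)
    qed (rule cD)
  qed
  have dm2: "c (DM_join X Y) = c X \<inter> c Y" if "X \<in> DM" "Y \<in> DM" for X Y
  proof -
    have "DM_join X Y = c (c X \<inter> c Y)" using dm1[OF cD cD, of X Y] cinv that by simp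
    hence "c (DM_join X Y) = c (c (c X \<inter> c Y))" by simp
    also have "\<dots> = c X \<inter> c Y" by (rule cinv[OF int_DM[OF cD cD]])
    finally show ?thesis .
  qed
  have key: "A = DM_join A (c B) \<inter> B" if "A \<in> DM" "B \<in> DM" "A \<subseteq> B" for A B
  proof -
    have cBA: "c B \<subseteq> c A" using canti that by blast
    have j: "DM_join (c A) (c B) = c A"
      by (rule subset_antisym[OF join_least[OF subset_refl cBA cD] join_ub1])
    have "c A = DM_join (c A \<inter> B) (c B)" using oml[OF cD cD, of A B] j cinv that by simp
    hence "c (c A) = c (DM_join (c A \<inter> B) (c B))" by simp
    hence "A = c (DM_join (c A \<inter> B) (c B))" using cinv that by simp
    also have "\<dots> = c (c A \<inter> B) \<inter> c (c B)" by (rule dm2[OF int_DM[OF cD that(2)] cD])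
    also have "c (c B) = B" using cinv that by simp
    also have "c (c A \<inter> B) = DM_join (c (c A)) (c B)" by (rule dm1[OF cD that(2)])
    also have "c (c A) = A" using cinv that by simp
    finally show ?thesis .
  qed
  have cL: "c (LB {y}) = LB {cmp y}" for y
  proof -
    have "cmp ` LB {y} = UB {cmp y}"
    proof
      show "cmp ` LB {y} \<subseteq> UB {cmp y}" unfolding LB_def UB_def using anti by auto
      show "UB {cmp y} \<subseteq> cmp ` LB {y}"
      proof
        fix u assume "u \<in> UB {cmp y}"
        hence "cmp y \<le> u" unfolding UB_def by simp
        hence "cmp u \<le> y" using anti[of "cmp y" u] inv by simp
        hence "cmp u \<in> LB {y}" unfolding LB_def by simp
        moreover have "u = cmp (cmp u)" using inv by simp
        ultimately show "u \<in> cmp ` LB {y}" by blast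
      qed
    qed
    hence "c (LB {y}) = LB (UB (LB {cmp y}))" unfolding c_def DM_cmp_def by (simp add: UL1)
    thus ?thesis by (simp add: LUL)
  qed
  show ?thesis unfolding pseudo_orthomodular_def
  proof (intro allI)
    fix x y :: 'a
    have s: "LB {x, y} \<subseteq> LB {y}" by (rule LB_anti) auto
    have "LB (UB (LB {x, y} \<union> {cmp y}) \<union> {y}) = LB (UB (LB {x, y} \<union> {cmp y})) \<inter> LB {y}"
      by (simp only: LB_Un)
    moreover have e2: "UB (LB {x, y} \<union> {cmp y}) = UB (LB {x, y} \<union> LB {cmp y})"
      by (simp only: UB_Un UL1)
    moreover have e3: "LB (UB (LB {x, y} \<union> LB {cmp y})) = DM_join (LB {x, y}) (c (LB {y}))"
      by (simp only: DM_join_def cL)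
    moreover have e4: "DM_join (LB {x, y}) (c (LB {y})) \<inter> LB {y} = LB {x, y}"
      using key[OF LB_DM LB_DM s] by simp
    ultimately show "LB (UB (LB {x, y} \<union> {cmp y}) \<union> {y}) = LB {x, y}" by (simp only:)
  qed
qed

end
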